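(* Let $T:\mathbb{R}^n\to\mathbb{R}^n$ be topical. The set of additive eigenvectors of $T$ is nonempty and bounded in the variation norm if and only if $$r(T^J_{-\infty})<\lambda(T^{[n]\setminus J}_\infty)$$ for every nonempty proper subset $J\subset[n]$.
   Context: $T$ is topical if it is order-preserving ($x\le y\Rightarrow T(x)\le T(y)$, entrywise) and additively homogeneous ($T(x+c\mathbf{1})=T(x)+c\mathbf{1}$ for all $c\in\mathbb{R}$, $\mathbf{1}$ the all-ones vector). $x\in\mathbb{R}^n$ is an additive eigenvector if $T(x)=x+\lambda\mathbf{1}$ for some $\lambda\in\mathbb{R}$. Variation norm: $\|x\|_{\mathrm{var}}=\max_ix_i-\min_jx_j$. A topical $T$ extends continuously to order-preserving additively homogeneous maps on $(-\infty,\infty]^n$ and on $[-\infty,\infty)^n$, again denoted $T$. For $\alpha\in[-\infty,\infty]$, $P^J_\alpha(x)_j=x_j$ for $j\in J$ and $\alpha$ otherwise; $T^J_{-\infty}=P^J_{-\infty}TP^J_{-\infty}$ on $[-\infty,\infty)^n$ and $T^J_\infty=P^J_\infty TP^J_\infty$ on $(-\infty,\infty]^n$. For such maps $S$: $r(S)=\inf_{x\in\mathbb{R}^n}\max_i(S(x)_i-x_i)$ and $\lambda(S)=\sup_{x\in\mathbb{R}^n}\min_i(S(x)_i-x_i)$, with values in $[-\infty,\infty]$. *)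

theory Defs
  imports "HOL-Analysis.Analysis" "HOL-Library.Extended_Real"
begin

definition topical :: "(real^'n \<Rightarrow> real^'n) \<Rightarrow> bool" where
  "topical T \<longleftrightarrow>
     (\<forall>x y. (\<forall>i. x$i \<le> y$i) \<longrightarrow> (\<forall>i. T x $ i \<le> T y $ i)) \<and>
     (\<forall>x (c::real). T (\<chi> i. x$i + c) = (\<chi> i. T x $ i + c))"

definition additive_eigenvectors :: "(real^'n \<Rightarrow> real^'n) \<Rightarrow> (real^'n) set" where
  "additive_eigenvectors T = {x. \<exists>c::real. T x = (\<chi> i. x$i + c)}"

definition var_norm :: "real^'n \<Rightarrow> real" where
  "var_norm x = Max (range (\<lambda>i. x$i)) - Min (range (\<lambda>j. x$j))"

text \<open>Continuous extension of T to [-inf,inf)^n (monotone limit from above)\<close>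
definition ext_bot :: "(real^'n \<Rightarrow> real^'n) \<Rightarrow> ereal^'n \<Rightarrow> ereal^'n" where
  "ext_bot T x = (\<chi> i. INF y\<in>{y::real^'n. \<forall>j. x$j \<le> ereal (y$j)}. ereal (T y $ i))"

text \<open>Continuous extension of T to (-inf,inf]^n (monotone limit from below)\<close>
definition ext_top :: "(real^'n \<Rightarrow> real^'n) \<Rightarrow> ereal^'n \<Rightarrow> ereal^'n" where
  "ext_top T x = (\<chi> i. SUP y\<in>{y::real^'n. \<forall>j. ereal (y$j) \<le> x$j}. ereal (T y $ i))"

definition proj :: "'n set \<Rightarrow> ereal \<Rightarrow> ereal^'n \<Rightarrow> ereal^'n" where
  "proj J \<alpha> x = (\<chi> i. if i \<in> J then x$i else \<alpha>)"

definition T_bot :: "'n set \<Rightarrow> (real^'n \<Rightarrow> real^'n) \<Rightarrow> ereal^'n \<Rightarrow> ereal^'n" where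
  "T_bot J T x = proj J (-\<infinity>) (ext_bot T (proj J (-\<infinity>) x))"

definition T_top :: "'n set \<Rightarrow> (real^'n \<Rightarrow> real^'n) \<Rightarrow> ereal^'n \<Rightarrow> ereal^'n" where
  "T_top J T x = proj J \<infinity> (ext_top T (proj J \<infinity> x))"

definition embed :: "real^'n \<Rightarrow> ereal^'n" where
  "embed x = (\<chi> i. ereal (x$i))"

definition r_upper :: "(ereal^'n \<Rightarrow> ereal^'n) \<Rightarrow> ereal" where
  "r_upper S = (INF x\<in>(UNIV::(real^'n) set). Max (range (\<lambda>i. S (embed x) $ i - ereal (x$i))))"

definition lambda_lower :: "(ereal^'n \<Rightarrow> ereal^'n) \<Rightarrow> ereal" where
  "lambda_lower S = (SUP x\<in>(UNIV::(real^'n) set). Min (range (\<lambda>i. S (embed x) $ i - ereal (x$i))))"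

end

theory Submission
  imports Defs
begin


lemma topical_mono:
  assumes "topical T" "\<And>i. x$i \<le> y$i"
  shows "T x $ k \<le> T y $ k"
  using assms unfolding topical_def by blast

lemma topical_shift:
  assumes "topical T"
  shows "T (\<chi> i. x$i + c) $ k = T x $ k + c"
  using assms unfolding topical_def by simp

lemma topical_le_shift:
  assumes "topical T" "\<And>i. x$i \<le> y$i + d"
  shows "T x $ k \<le> T y $ k + d"
proof -
  have "T x $ k \<le> T (\<chi> i. y$i + d) $ k"
    by (rule topical_mono[OF assms(1)]) (simp add: assms(2))
  then show ?thesis using topical_shift[OF assms(1)] by simp
qed

lemma topical_ge_shift:
  assumes "topical T" "\<And>i. y$i + d \<le> x$i"
  shows "T y $ k + d \<le> T x $ k"
proof -
  have "T (\<chi> i. y$i + d) $ k \<le> T x $ k"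
    by (rule topical_mono[OF assms(1)]) (simp add: assms(2))
  then show ?thesis using topical_shift[OF assms(1)] by simp
qed

lemma topical_lip:
  assumes "topical T"
  shows "\<bar>T x $ k - T y $ k\<bar> \<le> norm (x - y)"
proof -
  have c: "\<bar>x$i - y$i\<bar> \<le> norm (x - y)" for i
    using component_le_norm_cart[of "x - y" i] by simp
  have c1: "x$i \<le> y$i + norm (x - y)" for i using c[of i] by linarith
  have c2: "y$i \<le> x$i + norm (x - y)" for i using c[of i] by linarith
  have "T x $ k \<le> T y $ k + norm (x - y)"
    by (rule topical_le_shift[OF assms c1])
  moreover have "T y $ k \<le> T x $ k + norm (x - y)"
    by (rule topical_le_shift[OF assms c2])
  ultimately show ?thesis by linarith
qed

lemma lip_cont:
  fixes f :: "real^'n \<Rightarrow> real"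
  assumes "\<And>x y. \<bar>f x - f y\<bar> \<le> L * norm (x - y)" "0 \<le> L"
  shows "continuous_on S f"
proof -
  have "L-lipschitz_on S f"
    by (rule lipschitz_onI) (use assms in \<open>auto simp: dist_norm dist_real_def\<close>)
  then show ?thesis using lipschitz_on_continuous_on by blast
qed

lemma topical_comp_cont:
  assumes "topical T"
  shows "continuous_on S (\<lambda>x. T x $ k)"
  by (rule lip_cont[of _ 1]) (use topical_lip[OF assms] in auto)

lemma Max_le_shift:
  assumes "finite K" "K \<noteq> {}" "\<And>k. k \<in> K \<Longrightarrow> f k \<le> g k + d"
  shows "Max (f ` K) \<le> Max (g ` K) + (d::real)"
proof -
  have "Max (f ` K) \<in> f ` K" using assms by (intro Max_in) auto
  then obtain k where k: "k \<in> K" "Max (f ` K) = f k" by blast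
  have "g k \<le> Max (g ` K)" using assms k by auto
  then show ?thesis using k assms(3)[of k] by linarith
qed

lemma Max_comp_cont:
  fixes K :: "'n::finite set"
  assumes "topical T" "K \<noteq> {}"
  shows "continuous_on S (\<lambda>x. Max ((\<lambda>k. T x $ k) ` K))"
proof (rule lip_cont[of _ 1])
  fix x y :: "real^'n"
  have h1: "T x $ k \<le> T y $ k + norm (x - y)" for k
    using topical_lip[OF assms(1), of x k y] by linarith
  have h2: "T y $ k \<le> T x $ k + norm (x - y)" for k
    using topical_lip[OF assms(1), of x k y] by linarith
  have "Max ((\<lambda>k. T x $ k) ` K) \<le> Max ((\<lambda>k. T y $ k) ` K) + norm (x - y)"
    by (rule Max_le_shift) (use assms h1 in auto)
  moreover have "Max ((\<lambda>k. T y $ k) ` K) \<le> Max ((\<lambda>k. T x $ k) ` K) + norm (x - y)"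
    by (rule Max_le_shift) (use assms h2 in auto)
  ultimately show "\<bar>Max ((\<lambda>k. T x $ k) ` K) - Max ((\<lambda>k. T y $ k) ` K)\<bar> \<le> 1 * norm (x - y)"
    by linarith
qed simp



lemma clamp_fix:
  fixes T :: "real^'n \<Rightarrow> real^'n"
  assumes tT: "topical T" and K: "K \<noteq> {}" and R: "R > 0"
  shows "\<exists>x M. (\<forall>k. k \<notin> K \<longrightarrow> x$k = -R) \<and> (\<forall>k\<in>K. -R \<le> x$k \<and> x$k \<le> 0) \<and>
     (\<exists>k0\<in>K. x$k0 = 0) \<and> (\<forall>k\<in>K. T x $ k \<le> x$k + M) \<and>
     (\<forall>k\<in>K. -R < x$k \<longrightarrow> T x $ k = x$k + M)"
proof -
  define lo :: "real^'n" where "lo = (\<chi> k. -R)"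
  define hi :: "real^'n" where "hi = (\<chi> k. if k \<in> K then 0 else -R)"
  define Mx where "Mx = (\<lambda>x. Max ((\<lambda>k. T x $ k) ` K))"
  define F where "F = (\<lambda>x. \<chi> k. if k \<in> K then max (T x $ k - Mx x) (-R) else -R)"
  have fin: "finite K" by simp
  have Mx_ge: "T x $ k \<le> Mx x" if "k \<in> K" for x k
    unfolding Mx_def using fin that by auto
  have cM: "continuous_on (cbox lo hi) Mx"
    unfolding Mx_def by (rule Max_comp_cont[OF tT K])
  have "continuous_on (cbox lo hi) F"
    unfolding F_def
    apply (rule continuous_on_vec_lambda)
    subgoal for k
      apply (cases "k \<in> K")
       apply simp
       apply (intro continuous_on_max continuous_on_diff continuous_on_const topical_comp_cont[OF tT] cM)
      apply simp
      done
    done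
  moreover have "F \<in> cbox lo hi \<rightarrow> cbox lo hi"
  proof
    fix x assume "x \<in> cbox lo hi"
    show "F x \<in> cbox lo hi"
      unfolding mem_box_cart
    proof
      fix k
      show "lo $ k \<le> F x $ k \<and> F x $ k \<le> hi $ k"
        unfolding F_def lo_def hi_def using Mx_ge[of k x] R by (cases "k \<in> K") auto
    qed
  qed
  moreover have "lo \<in> cbox lo hi"
    unfolding lo_def hi_def using R by (auto simp: mem_box_cart)
  then have "cbox lo hi \<noteq> {}" by blast
  ultimately obtain x where x: "x \<in> cbox lo hi" "F x = x"
    using brouwer[OF compact_cbox convex_box(1), of lo hi F] by blast
  have xk: "x $ k = (if k \<in> K then max (T x $ k - Mx x) (-R) else -R)" for k
  proof -
    have "x $ k = F x $ k" using x(2) by simp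
    then show ?thesis unfolding F_def by simp
  qed
  have "Mx x \<in> (\<lambda>k. T x $ k) ` K" unfolding Mx_def using fin K by (intro Max_in) auto
  then obtain k0 where k0: "k0 \<in> K" "Mx x = T x $ k0" by blast
  have A1: "\<forall>k. k \<notin> K \<longrightarrow> x$k = -R" using xk by simp
  have A2: "\<forall>k\<in>K. -R \<le> x$k \<and> x$k \<le> 0"
  proof
    fix k assume k: "k \<in> K"
    have "lo$k \<le> x$k \<and> x$k \<le> hi$k" using x(1) unfolding mem_box_cart by blast
    then show "-R \<le> x$k \<and> x$k \<le> 0" using k unfolding lo_def hi_def by simp
  qed
  have A3: "\<exists>k0\<in>K. x$k0 = 0" using xk[of k0] k0 R by auto
  have A4: "\<forall>k\<in>K. T x $ k \<le> x$k + Mx x"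
  proof
    fix k assume "k \<in> K" then show "T x $ k \<le> x$k + Mx x" using xk[of k] by simp
  qed
  have A5: "\<forall>k\<in>K. -R < x$k \<longrightarrow> T x $ k = x$k + Mx x"
  proof (intro ballI impI)
    fix k assume "k \<in> K" "-R < x$k" then show "T x $ k = x$k + Mx x" using xk[of k] by (simp add: max_def split: if_splits)
  qed
  show ?thesis using A1 A2 A3 A4 A5 by blast
qed

lemma sandwich:
  fixes T :: "real^'n \<Rightarrow> real^'n"
  assumes tT: "topical T" and ab: "\<And>i. a$i \<le> b$i"
    and sa: "\<And>i. a$i + c \<le> T a $ i" and sb: "\<And>i. T b $ i \<le> b$i + c"
  shows "\<exists>e. (\<forall>i. a$i \<le> e$i \<and> e$i \<le> b$i) \<and> T e = (\<chi> i. e$i + c)"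
proof -
  define F where "F = (\<lambda>x. \<chi> k. T x $ k - c)"
  have "continuous_on (cbox a b) F"
    unfolding F_def by (intro continuous_on_vec_lambda continuous_on_diff continuous_on_const topical_comp_cont[OF tT])
  moreover have "F \<in> cbox a b \<rightarrow> cbox a b"
  proof
    fix x assume "x \<in> cbox a b"
    then have x: "\<And>i. a$i \<le> x$i \<and> x$i \<le> b$i" unfolding mem_box_cart by auto
    have "T a $ i \<le> T x $ i" "T x $ i \<le> T b $ i" for i
      using topical_mono[OF tT] x by auto
    then show "F x \<in> cbox a b" unfolding F_def mem_box_cart using sa sb 
      by (auto simp: algebra_simps) (smt (verit))+
  qed
  moreover have "a \<in> cbox a b" using ab by (auto simp: mem_box_cart)
  then have "cbox a b \<noteq> {}" by blast
  ultimately obtain x where x: "x \<in> cbox a b" "F x = x"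
    using brouwer[OF compact_cbox convex_box(1), of a b F] by blast
  have "T x $ i = x$i + c" for i
  proof -
    have "x $ i = F x $ i" using x(2) by simp
    then show ?thesis unfolding F_def by simp
  qed
  then have "T x = (\<chi> i. x$i + c)" by (simp add: vec_eq_iff)
  moreover have "\<forall>i. a$i \<le> x$i \<and> x$i \<le> b$i" using x(1) unfolding mem_box_cart by blast
  ultimately show ?thesis by blast
qed



lemma T_bot_embed:
  "T_bot K T (embed x) $ i = (if i \<in> K then (INF y\<in>{y. \<forall>j\<in>K. x$j \<le> y$j}. ereal (T y $ i)) else -\<infinity>)"
proof -
  have "{y. \<forall>j. proj K (-\<infinity>) (embed x) $ j \<le> ereal (y$j)} = {y. \<forall>j\<in>K. x$j \<le> y$j}"
    unfolding proj_def embed_def by auto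
  then show ?thesis unfolding T_bot_def ext_bot_def by (simp add: proj_def)
qed

lemma T_top_embed:
  "T_top L T (embed x) $ i = (if i \<in> L then (SUP y\<in>{y. \<forall>j\<in>L. y$j \<le> x$j}. ereal (T y $ i)) else \<infinity>)"
proof -
  have "{y. \<forall>j. ereal (y$j) \<le> proj L \<infinity> (embed x) $ j} = {y. \<forall>j\<in>L. y$j \<le> x$j}"
    unfolding proj_def embed_def by auto
  then show ?thesis unfolding T_top_def ext_top_def by (simp add: proj_def)
qed

lemma ereal_minus_less: "e - ereal r < ereal a \<longleftrightarrow> e < ereal (a + r)"
  by (cases e) auto

lemma ereal_le_minus: "ereal a \<le> e - ereal r \<longleftrightarrow> ereal (a + r) \<le> e"
  by (cases e) auto

lemma ereal_minus_le: "e - ereal r \<le> ereal a \<longleftrightarrow> e \<le> ereal (a + r)"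
  by (cases e) auto

lemma ereal_less_minus: "ereal a < e - ereal r \<longleftrightarrow> ereal (a + r) < e"
  by (cases e) auto

lemma R1:
  fixes T :: "real^'n \<Rightarrow> real^'n"
  assumes "r_upper (T_bot K T) < ereal a"
  shows "\<exists>x. \<forall>i\<in>K. \<exists>y. (\<forall>j\<in>K. x$j \<le> y$j) \<and> T y $ i < x$i + a"
proof -
  obtain x where x: "Max (range (\<lambda>i. T_bot K T (embed x) $ i - ereal (x$i))) < ereal a"
    using assms unfolding r_upper_def by (auto simp: INF_less_iff)
  have h: "T_bot K T (embed x) $ i - ereal (x$i) < ereal a" for i
    using x by (simp add: Max_less_iff)
  have "\<exists>y. (\<forall>j\<in>K. x$j \<le> y$j) \<and> T y $ i < x$i + a" if "i \<in> K" for i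
    using that h[of i] by (auto simp: T_bot_embed ereal_minus_less INF_less_iff algebra_simps)
  then show ?thesis by blast
qed

lemma R2:
  fixes T :: "real^'n \<Rightarrow> real^'n"
  assumes "ereal c \<le> r_upper (T_bot K T)"
  shows "\<exists>i\<in>K. \<forall>y. (\<forall>j\<in>K. x$j \<le> y$j) \<longrightarrow> x$i + c \<le> T y $ i"
proof -
  have "ereal c \<le> Max (range (\<lambda>i. T_bot K T (embed x) $ i - ereal (x$i)))"
    using assms unfolding r_upper_def by (auto simp: le_INF_iff)
  then obtain i where i: "ereal c \<le> T_bot K T (embed x) $ i - ereal (x$i)"
    by (auto simp: Max_ge_iff)
  have iK: "i \<in> K"
  proof (rule ccontr)
    assume "i \<notin> K" then show False using i by (simp add: T_bot_embed)
  qed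
  then have "ereal (c + x$i) \<le> (INF y\<in>{y. \<forall>j\<in>K. x$j \<le> y$j}. ereal (T y $ i))"
    using i by (simp add: T_bot_embed ereal_le_minus)
  then have "\<forall>y. (\<forall>j\<in>K. x$j \<le> y$j) \<longrightarrow> x$i + c \<le> T y $ i"
    by (auto simp: le_INF_iff algebra_simps)
  then show ?thesis using iK by blast
qed

lemma R3:
  fixes T :: "real^'n \<Rightarrow> real^'n"
  assumes "T u = (\<chi> i. u$i + c)"
  shows "r_upper (T_bot K T) \<le> ereal c"
proof -
  have "T_bot K T (embed u) $ i - ereal (u$i) \<le> ereal c" for i
  proof (cases "i \<in> K")
    case True
    have "(INF y\<in>{y. \<forall>j\<in>K. u$j \<le> y$j}. ereal (T y $ i)) \<le> ereal (T u $ i)"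
      by (rule INF_lower) auto
    then show ?thesis using True assms by (simp add: T_bot_embed ereal_minus_le algebra_simps)
  qed (simp add: T_bot_embed)
  then have "Max (range (\<lambda>i. T_bot K T (embed u) $ i - ereal (u$i))) \<le> ereal c"
    by (auto simp: Max_le_iff)
  then show ?thesis unfolding r_upper_def by (meson INF_lower2 UNIV_I)
qed

lemma L1:
  fixes T :: "real^'n \<Rightarrow> real^'n"
  assumes "ereal a < lambda_lower (T_top L T)"
  shows "\<exists>z. \<forall>i\<in>L. \<exists>y. (\<forall>j\<in>L. y$j \<le> z$j) \<and> z$i + a < T y $ i"
proof -
  obtain z where z: "ereal a < Min (range (\<lambda>i. T_top L T (embed z) $ i - ereal (z$i)))"
    using assms unfolding lambda_lower_def by (auto simp: less_SUP_iff)
  have h: "ereal a < T_top L T (embed z) $ i - ereal (z$i)" for i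
    using z by (simp add: Min_gr_iff)
  have "\<exists>y. (\<forall>j\<in>L. y$j \<le> z$j) \<and> z$i + a < T y $ i" if "i \<in> L" for i
    using that h[of i] by (auto simp: T_top_embed ereal_less_minus less_SUP_iff algebra_simps)
  then show ?thesis by blast
qed

lemma L2:
  fixes T :: "real^'n \<Rightarrow> real^'n"
  assumes "lambda_lower (T_top L T) \<le> ereal c"
  shows "\<exists>i\<in>L. \<forall>y. (\<forall>j\<in>L. y$j \<le> x$j) \<longrightarrow> T y $ i \<le> x$i + c"
proof -
  have "Min (range (\<lambda>i. T_top L T (embed x) $ i - ereal (x$i))) \<le> ereal c"
    using assms unfolding lambda_lower_def by (auto simp: SUP_le_iff)
  then obtain i where i: "T_top L T (embed x) $ i - ereal (x$i) \<le> ereal c"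
    by (auto simp: Min_le_iff)
  have iL: "i \<in> L"
  proof (rule ccontr)
    assume "i \<notin> L" then show False using i by (simp add: T_top_embed)
  qed
  then have "(SUP y\<in>{y. \<forall>j\<in>L. y$j \<le> x$j}. ereal (T y $ i)) \<le> ereal (c + x$i)"
    using i by (simp add: T_top_embed ereal_minus_le)
  then have "\<forall>y. (\<forall>j\<in>L. y$j \<le> x$j) \<longrightarrow> T y $ i \<le> x$i + c"
    by (auto simp: SUP_le_iff algebra_simps)
  then show ?thesis using iL by blast
qed

lemma L3:
  fixes T :: "real^'n \<Rightarrow> real^'n"
  assumes "T u = (\<chi> i. u$i + c)"
  shows "ereal c \<le> lambda_lower (T_top L T)"
proof -
  have "ereal c \<le> T_top L T (embed u) $ i - ereal (u$i)" for i
  proof (cases "i \<in> L")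
    case True
    have "ereal (T u $ i) \<le> (SUP y\<in>{y. \<forall>j\<in>L. y$j \<le> u$j}. ereal (T y $ i))"
      by (rule SUP_upper) auto
    then show ?thesis using True assms by (simp add: T_top_embed ereal_le_minus algebra_simps)
  qed (simp add: T_top_embed)
  then have "ereal c \<le> Min (range (\<lambda>i. T_top L T (embed u) $ i - ereal (u$i)))"
    by (auto simp: Min_ge_iff)
  then show ?thesis unfolding lambda_lower_def by (meson SUP_upper2 UNIV_I)
qed



lemma ex_argmax: "\<exists>i0. \<forall>k. (f::'n::finite \<Rightarrow> real) k \<le> f i0"
proof -
  have "Max (range f) \<in> range f" by (intro Max_in) auto
  then obtain i0 where "Max (range f) = f i0" by (metis imageE)
  moreover have "f k \<le> Max (range f)" for k by (rule Max_ge) auto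
  ultimately show ?thesis by metis
qed

lemma ex_argmin: "\<exists>i0. \<forall>k. f i0 \<le> (f::'n::finite \<Rightarrow> real) k"
  using ex_argmax[of "\<lambda>k. - f k"] by auto

lemma barrier_false:
  fixes T :: "real^'n \<Rightarrow> real^'n"
  assumes tT: "topical T" and J: "J \<noteq> {}" "J \<noteq> UNIV"
    and wJ: "\<forall>i\<in>J. T w $ i < w$i + a" and wL: "\<forall>i. i \<notin> J \<longrightarrow> w$i + a < T w $ i"
    and xJ: "\<forall>i\<in>J. x$i + M \<le> T x $ i" and xL: "\<forall>i. i \<notin> J \<longrightarrow> T x $ i \<le> x$i + M"
    and wG: "\<forall>i\<in>J. \<forall>j. j \<notin> J \<longrightarrow> w$i - w$j \<le> G"
    and xG: "\<forall>i\<in>J. \<forall>j. j \<notin> J \<longrightarrow> x$j + G < x$i"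
  shows False
proof -
  define d where "d = (\<lambda>k. w$k - x$k)"
  obtain i0 where i0: "\<forall>k. d k \<le> d i0" using ex_argmax by blast
  obtain i1 where i1: "\<forall>k. d i1 \<le> d k" using ex_argmin by blast
  obtain jL where jL: "jL \<notin> J" using J(2) by blast
  obtain iJ where iJ: "iJ \<in> J" using J(1) by blast
  have i0L: "i0 \<notin> J"
  proof
    assume "i0 \<in> J"
    then have "w$i0 - w$jL \<le> G" "x$jL + G < x$i0" using wG xG jL by auto
    then have "d i0 < d jL" unfolding d_def by linarith
    then show False using i0 by (meson not_le)
  qed
  have i1J: "i1 \<in> J"
  proof (rule ccontr)
    assume "i1 \<notin> J"
    then have "w$iJ - w$i1 \<le> G" "x$i1 + G < x$iJ" using wG xG iJ by auto
    then have "d iJ < d i1" unfolding d_def by linarith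
    then show False using i1 by (meson not_le)
  qed
  have h0: "w$k \<le> x$k + d i0" for k using i0[rule_format, of k] unfolding d_def by linarith
  have h1: "x$k + d i1 \<le> w$k" for k using i1[rule_format, of k] unfolding d_def by linarith
  have "T w $ i0 \<le> T x $ i0 + d i0"
    by (rule topical_le_shift[OF tT h0])
  moreover have "d i0 = w$i0 - x$i0" by (simp add: d_def)
  moreover have "w$i0 + a < T w $ i0" "T x $ i0 \<le> x$i0 + M" using wL xL i0L by auto
  ultimately have "a < M" by linarith
  have "T x $ i1 + d i1 \<le> T w $ i1"
    by (rule topical_ge_shift[OF tT h1])
  moreover have "d i1 = w$i1 - x$i1" by (simp add: d_def)
  moreover have "T w $ i1 < w$i1 + a" "x$i1 + M \<le> T x $ i1" using wJ xJ i1J by auto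
  ultimately have "M < a" by linarith
  then show False using \<open>a < M\<close> by linarith
qed



lemma barrier_exists:
  fixes T :: "real^'n \<Rightarrow> real^'n"
  assumes tT: "topical T"
    and lt: "r_upper (T_bot J T) < lambda_lower (T_top (UNIV - J) T)"
  shows "\<exists>w a. (\<forall>i\<in>J. T w $ i < w$i + a) \<and> (\<forall>i. i \<notin> J \<longrightarrow> w$i + a < T w $ i)"
proof -
  obtain a where a: "r_upper (T_bot J T) < ereal a" "ereal a < lambda_lower (T_top (UNIV - J) T)"
    using ereal_dense2[OF lt] by blast
  obtain x where x: "\<forall>i\<in>J. \<exists>y. (\<forall>j\<in>J. x$j \<le> y$j) \<and> T y $ i < x$i + a"
    using R1[OF a(1)] by blast
  obtain z where z: "\<forall>i\<in>UNIV - J. \<exists>y. (\<forall>j\<in>UNIV - J. y$j \<le> z$j) \<and> z$i + a < T y $ i"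
    using L1[OF a(2)] by blast
  obtain Y where Y: "\<forall>i\<in>J. (\<forall>j\<in>J. x$j \<le> Y i $j) \<and> T (Y i) $ i < x$i + a"
    using bchoice[OF x] by blast
  obtain Y' where Y': "\<forall>i\<in>UNIV - J. (\<forall>j\<in>UNIV - J. Y' i $ j \<le> z$j) \<and> z$i + a < T (Y' i) $ i"
    using bchoice[OF z] by blast
  define t where "t = (\<Sum>i\<in>UNIV. \<Sum>k\<in>UNIV. \<bar>z$k\<bar> + \<bar>Y i $ k\<bar> + \<bar>Y' i $ k\<bar> + \<bar>x$k\<bar>)"
  have tb: "\<bar>z$k\<bar> + \<bar>Y i $ k\<bar> + \<bar>Y' i $ k\<bar> + \<bar>x$k\<bar> \<le> t" for i k
  proof -
    have "\<bar>z$k\<bar> + \<bar>Y i $ k\<bar> + \<bar>Y' i $ k\<bar> + \<bar>x$k\<bar> \<le> (\<Sum>k\<in>UNIV. \<bar>z$k\<bar> + \<bar>Y i $ k\<bar> + \<bar>Y' i $ k\<bar> + \<bar>x$k\<bar>)"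
      by (rule member_le_sum) auto
    also have "\<dots> \<le> t" unfolding t_def
      by (rule member_le_sum[of i UNIV "\<lambda>i. \<Sum>k\<in>UNIV. \<bar>z$k\<bar> + \<bar>Y i $ k\<bar> + \<bar>Y' i $ k\<bar> + \<bar>x$k\<bar>"])
         (auto intro: sum_nonneg)
    finally show ?thesis .
  qed
  define w where "w = (\<chi> k. if k \<in> J then x$k else z$k - t)"
  have "\<forall>i\<in>J. T w $ i < w$i + a"
  proof
    fix i assume i: "i \<in> J"
    have "\<forall>k. w$k \<le> Y i $ k + 0"
    proof
      fix k show "w$k \<le> Y i $ k + 0"
        using Y i tb[of k i] unfolding w_def by (cases "k \<in> J") auto
    qed
    then have "T w $ i \<le> T (Y i) $ i + 0" using topical_le_shift[OF tT] by blast
    then show "T w $ i < w$i + a" using Y i unfolding w_def by auto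
  qed
  moreover have "\<forall>i. i \<notin> J \<longrightarrow> w$i + a < T w $ i"
  proof (intro allI impI)
    fix i assume i: "i \<notin> J"
    have "\<forall>k. Y' i $ k + (-t) \<le> w$k"
    proof
      fix k show "Y' i $ k + (-t) \<le> w$k"
        using Y' i tb[of k i] unfolding w_def by (cases "k \<in> J") auto
    qed
    then have "T (Y' i) $ i + (-t) \<le> T w $ i" using topical_ge_shift[OF tT] by blast
    moreover have "z$i + a < T (Y' i) $ i" using Y' i by auto
    moreover have "w$i = z$i - t" using i unfolding w_def by simp
    ultimately show "w$i + a < T w $ i" by linarith
  qed
  ultimately show ?thesis by blast
qed

lemma cond_gap:
  fixes T :: "real^'n \<Rightarrow> real^'n"
  assumes tT: "topical T" and J: "J \<noteq> {}" "J \<noteq> UNIV"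
    and lt: "r_upper (T_bot J T) < lambda_lower (T_top (UNIV - J) T)"
  shows "\<exists>G\<ge>0. \<forall>x M. (\<forall>i\<in>J. x$i + M \<le> T x $ i) \<longrightarrow> (\<forall>i. i \<notin> J \<longrightarrow> T x $ i \<le> x$i + M)
           \<longrightarrow> \<not> (\<forall>i\<in>J. \<forall>j. j \<notin> J \<longrightarrow> x$j + G < x$i)"
proof -
  obtain w a where wa: "\<forall>i\<in>J. T w $ i < w$i + a" "\<forall>i. i \<notin> J \<longrightarrow> w$i + a < T w $ i"
    using barrier_exists[OF tT lt] by blast
  define G where "G = 2 * (\<Sum>k\<in>UNIV. \<bar>w$k\<bar>)"
  have wG: "\<forall>i\<in>J. \<forall>j. j \<notin> J \<longrightarrow> w$i - w$j \<le> G"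
  proof (intro ballI allI impI)
    fix i j :: 'n
    have "\<bar>w$i\<bar> \<le> (\<Sum>k\<in>UNIV. \<bar>w$k\<bar>)" "\<bar>w$j\<bar> \<le> (\<Sum>k\<in>UNIV. \<bar>w$k\<bar>)"
      by (auto intro: member_le_sum)
    then show "w$i - w$j \<le> G" unfolding G_def by linarith
  qed
  have "G \<ge> 0" unfolding G_def by (auto intro: sum_nonneg)
  moreover have "\<forall>x M. (\<forall>i\<in>J. x$i + M \<le> T x $ i) \<longrightarrow> (\<forall>i. i \<notin> J \<longrightarrow> T x $ i \<le> x$i + M)
           \<longrightarrow> \<not> (\<forall>i\<in>J. \<forall>j. j \<notin> J \<longrightarrow> x$j + G < x$i)"
    using barrier_false[OF tT J wa _ _ wG] by blast
  ultimately show ?thesis by blast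
qed



lemma gap_lemma:
  fixes x :: "real^'n"
  assumes G: "G \<ge> 0"
    and big: "Max (range (\<lambda>i. x$i)) - Min (range (\<lambda>i. x$i)) > (real CARD('n) - 1) * G"
  shows "\<exists>J. J \<noteq> {} \<and> J \<noteq> UNIV \<and> (\<forall>i\<in>J. \<forall>j. j \<notin> J \<longrightarrow> x$j + G < x$i)"
proof (rule ccontr)
  assume H: "\<not> ?thesis"
  define m where "m = Min (range (\<lambda>i. x$i))"
  define S where "S = (\<lambda>k::nat. {i. x$i \<le> m + real k * G})"
  have "m \<in> range (\<lambda>i. x$i)" unfolding m_def by (rule Min_in) auto
  then obtain imin where imin: "x$imin = m" by auto
  have mle: "m \<le> x$i" for i unfolding m_def by auto
  have Smono: "S k \<subseteq> S (Suc k)" for k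
  proof -
    have "real k * G \<le> real (Suc k) * G" using G by (intro mult_right_mono) auto
    then show ?thesis unfolding S_def by auto
  qed
  have claim: "k < CARD('n) \<Longrightarrow> k + 1 \<le> card (S k)" for k
  proof (induction k)
    case 0
    have "imin \<in> S 0" unfolding S_def using imin by simp
    then have "S 0 \<noteq> {}" by blast
    then show ?case by (simp add: card_gt_0_iff Suc_le_eq)
  next
    case (Suc k)
    then have IH: "k + 1 \<le> card (S k)" by simp
    show ?case
    proof (cases "S k = UNIV")
      case True
      then have "S (Suc k) = UNIV" using Smono[of k] by blast
      then show ?thesis using Suc.prems by simp
    next
      case False
      define J where "J = UNIV - S k"
      have "imin \<in> S k" unfolding S_def using imin G by simp
      then have "J \<noteq> UNIV" unfolding J_def by blast
      moreover have "J \<noteq> {}" using False unfolding J_def by blast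
      ultimately have "\<not> (\<forall>i\<in>J. \<forall>j. j \<notin> J \<longrightarrow> x$j + G < x$i)" using H by blast
      then obtain i j where ij: "i \<in> J" "j \<notin> J" "x$i \<le> x$j + G" by (meson not_less)
      have "i \<notin> S k" using ij unfolding J_def by blast
      moreover have "i \<in> S (Suc k)"
        using ij unfolding J_def S_def by (auto simp: algebra_simps)
      ultimately have "S k \<subset> S (Suc k)" using Smono[of k] by blast
      then have "card (S k) < card (S (Suc k))" by (intro psubset_card_mono) auto
      then show ?thesis using IH by simp
    qed
  qed
  have cpos: "CARD('n) \<ge> 1" by (simp add: Suc_leI)
  have "CARD('n) \<le> card (S (CARD('n) - 1))" using claim[of "CARD('n) - 1"] cpos by simp
  then have SU: "S (CARD('n) - 1) = UNIV"
    using card_seteq[of UNIV "S (CARD('n) - 1)"] by simp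
  have "Max (range (\<lambda>i. x$i)) \<in> range (\<lambda>i. x$i)" by (rule Max_in) auto
  then obtain imax where imax: "x$imax = Max (range (\<lambda>i. x$i))" by (metis rangeE)
  have "imax \<in> S (CARD('n) - 1)" using SU by blast
  then have "x$imax \<le> m + real (CARD('n) - 1) * G" unfolding S_def by blast
  moreover have "real (CARD('n) - 1) = real CARD('n) - 1" using cpos by (simp add: of_nat_diff)
  ultimately have h: "x$imax \<le> m + (real CARD('n) - 1) * G" by simp
  show False using big imax m_def h by linarith
qed



lemma CW:
  fixes T :: "real^'n \<Rightarrow> real^'n"
  assumes tT: "topical T" and K: "K \<noteq> {}" and weak: "\<forall>x. \<exists>i\<in>K. x$i + c \<le> T x $ i"
  shows "\<exists>A p. A \<noteq> {} \<and> A \<subseteq> K \<and> (\<forall>i\<in>A. \<forall>y. (\<forall>j\<in>A. p$j \<le> y$j) \<longrightarrow> p$i + c \<le> T y $ i)"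
proof -
  define P where "P = (\<lambda>(N::nat) (x::real^'n) M. (\<forall>k. k \<notin> K \<longrightarrow> x$k = -(real N + 1)) \<and>
     (\<forall>k\<in>K. -(real N + 1) \<le> x$k \<and> x$k \<le> 0) \<and>
     (\<exists>k0\<in>K. x$k0 = 0) \<and> (\<forall>k\<in>K. T x $ k \<le> x$k + M) \<and>
     (\<forall>k\<in>K. -(real N + 1) < x$k \<longrightarrow> T x $ k = x$k + M))"
  have "\<forall>N. \<exists>x M. P N x M"
  proof
    fix N :: nat
    show "\<exists>x M. P N x M" unfolding P_def by (rule clamp_fix[OF tT K]) simp
  qed
  then obtain X where "\<forall>N. \<exists>M. P N (X N) M" by metis
  then obtain Mf where PX: "\<And>N. P N (X N) (Mf N)" by metis
  have P1: "k \<notin> K \<Longrightarrow> X N $ k = -(real N + 1)" for N k using PX[of N] unfolding P_def by blast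
  have P2: "k \<in> K \<Longrightarrow> X N $ k \<le> 0" for N k using PX[of N] unfolding P_def by blast
  have P3: "\<exists>k0\<in>K. X N $ k0 = 0" for N using PX[of N] unfolding P_def by blast
  have P4: "k \<in> K \<Longrightarrow> T (X N) $ k \<le> X N $ k + Mf N" for N k using PX[of N] unfolding P_def by blast
  have P5: "k \<in> K \<Longrightarrow> -(real N + 1) < X N $ k \<Longrightarrow> T (X N) $ k = X N $ k + Mf N" for N k
    using PX[of N] unfolding P_def by blast
  have Mc: "c \<le> Mf N" for N
  proof -
    obtain i where i: "i \<in> K" "X N $ i + c \<le> T (X N) $ i" using weak by blast
    then show ?thesis using P4[of i N] by linarith
  qed
  have Xle: "X N $ k \<le> 0" for N k
    by (cases "k \<in> K") (use P1 P2 in auto)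
  define E where "E = (\<lambda>N. \<chi> k. exp (X N $ k))"
  have "bounded (range E)"
    unfolding bounded_iff
  proof (intro exI ballI)
    fix v assume "v \<in> range E"
    then obtain N where v: "v = E N" by blast
    have "norm v \<le> (\<Sum>k\<in>UNIV. \<bar>v$k\<bar>)" by (rule norm_le_l1_cart)
    also have "\<dots> \<le> of_nat (card (UNIV::'n set)) * 1"
      by (rule sum_bounded_above) (use Xle in \<open>auto simp: v E_def\<close>)
    finally show "norm v \<le> real CARD('n)" by simp
  qed
  then obtain l r where r: "strict_mono r" and lim: "(E \<circ> r) \<longlonglongrightarrow> l"
    using bounded_imp_convergent_subsequence by blast
  have comp: "(\<lambda>m. exp (X (r m) $ k)) \<longlonglongrightarrow> l$k" for k
    using tendsto_vec_nth[OF lim, of k] by (simp add: E_def o_def)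
  define A where "A = {k\<in>K. 0 < l$k}"
  define p :: "real^'n" where "p = (\<chi> k. ln (l$k))"
  have limA: "(\<lambda>m. X (r m) $ k) \<longlonglongrightarrow> p$k" if "k \<in> A" for k
  proof -
    have "(\<lambda>m. ln (exp (X (r m) $ k))) \<longlonglongrightarrow> ln (l$k)"
      by (rule tendsto_ln[OF comp]) (use that A_def in auto)
    then show ?thesis by (simp add: p_def)
  qed
  have rge: "m \<le> r m" for m using seq_suble[OF r] by blast
  have Ane: "A \<noteq> {}"
  proof
    assume A0: "A = {}"
    have "\<forall>k. eventually (\<lambda>m. exp (X (r m) $ k) < l$k + 1/2) sequentially"
    proof
      fix k show "eventually (\<lambda>m. exp (X (r m) $ k) < l$k + 1/2) sequentially"
        by (rule order_tendstoD(2)[OF comp]) simp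
    qed
    then have "eventually (\<lambda>m. \<forall>k. exp (X (r m) $ k) < l$k + 1/2) sequentially"
      by (intro eventually_all_finite) auto
    then obtain m where m: "\<forall>k. exp (X (r m) $ k) < l$k + 1/2"
      using eventually_sequentially by auto
    obtain k0 where k0: "k0 \<in> K" "X (r m) $ k0 = 0" using P3 by blast
    have "l$k0 \<le> 0" using A0 k0 unfolding A_def by auto
    then show False using m[rule_format, of k0] k0 by simp
  qed
  have main: "p$i + c \<le> T y $ i" if i: "i \<in> A" and y: "\<forall>j\<in>A. p$j \<le> y$j" for i y
  proof (rule field_le_epsilon)
    fix \<epsilon> :: real assume \<epsilon>: "0 < \<epsilon>"
    define \<delta> where "\<delta> = \<epsilon> / 2"
    have \<delta>: "0 < \<delta>" using \<epsilon> by (simp add: \<delta>_def)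
    have ev1: "eventually (\<lambda>m. X (r m) $ k \<le> y$k + \<delta>) sequentially" for k
    proof (cases "k \<in> A")
      case True
      have "eventually (\<lambda>m. X (r m) $ k < p$k + \<delta>) sequentially"
        by (rule order_tendstoD(2)[OF limA[OF True]]) (use \<delta> in simp)
      then show ?thesis
        by eventually_elim (use y True in force)
    next
      case False
      show ?thesis
      proof (cases "k \<in> K")
        case True
        then have "l$k \<le> 0" using False unfolding A_def by auto
        then have "l$k < exp (y$k)" by (smt (verit) exp_gt_zero)
        then have "eventually (\<lambda>m. exp (X (r m) $ k) < exp (y$k)) sequentially"
          by (rule order_tendstoD(2)[OF comp])
        then show ?thesis by eventually_elim (use \<delta> in auto)
      next
        case nK: False
        obtain n :: nat where n: "- y$k \<le> real n" using real_arch_simple by blast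
        show ?thesis
          unfolding eventually_sequentially
        proof (intro exI allI impI)
          fix m assume "n \<le> m"
          then have "real n \<le> real (r m)" using rge[of m] by linarith
          then show "X (r m) $ k \<le> y$k + \<delta>" using P1[OF nK] n \<delta> by auto
        qed
      qed
    qed
    have ev2: "eventually (\<lambda>m. p$i - \<delta> < X (r m) $ i) sequentially"
      by (rule order_tendstoD(1)[OF limA[OF i]]) (use \<delta> in simp)
    obtain n :: nat where n: "1 - p$i \<le> real n" using real_arch_simple by blast
    have ev3: "eventually (\<lambda>m. -(real (r m) + 1) < X (r m) $ i) sequentially"
    proof -
      have "eventually (\<lambda>m. p$i - 1 < X (r m) $ i) sequentially"
        by (rule order_tendstoD(1)[OF limA[OF i]]) simp
      moreover have "eventually (\<lambda>m. n \<le> m) sequentially" by (rule eventually_ge_at_top)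
      ultimately show ?thesis
      proof eventually_elim
        case (elim m)
        then have "real n \<le> real (r m)" using rge[of m] by linarith
        then show ?case using elim n by linarith
      qed
    qed
    have "eventually (\<lambda>m. (\<forall>k. X (r m) $ k \<le> y$k + \<delta>) \<and> p$i - \<delta> < X (r m) $ i \<and>
        -(real (r m) + 1) < X (r m) $ i) sequentially"
      using eventually_all_finite[OF ev1] ev2 ev3 by (intro eventually_conj) auto
    then obtain m where m: "\<forall>k. X (r m) $ k \<le> y$k + \<delta>" "p$i - \<delta> < X (r m) $ i"
        "-(real (r m) + 1) < X (r m) $ i"
      using eventually_sequentially by auto
    have iK: "i \<in> K" using i unfolding A_def by auto
    have "T (X (r m)) $ i \<le> T y $ i + \<delta>"
      by (rule topical_le_shift[OF tT]) (use m(1) in auto)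
    moreover have "T (X (r m)) $ i = X (r m) $ i + Mf (r m)" using P5[OF iK m(3)] .
    moreover have "c \<le> Mf (r m)" by (rule Mc)
    ultimately show "p$i + c \<le> T y $ i + \<epsilon>" using m(2) unfolding \<delta>_def by linarith
  qed
  show ?thesis
    by (rule exI[of _ A], rule exI[of _ p]) (use Ane main in \<open>auto simp: A_def\<close>)
qed



lemma topical_dual:
  fixes T :: "real^'n \<Rightarrow> real^'n"
  assumes tT: "topical T"
  shows "topical (\<lambda>x. - T (- x))"
  unfolding topical_def
proof (intro conjI allI impI)
  fix x y :: "real^'n" and i
  assume "\<forall>i. x$i \<le> y$i"
  then have "\<And>i. (- y)$i \<le> (- x)$i" by simp
  then have "T (- y) $ i \<le> T (- x) $ i" by (rule topical_mono[OF tT])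
  then show "(- T (- x)) $ i \<le> (- T (- y)) $ i" by simp
next
  fix x :: "real^'n" and c :: real
  have e: "- (\<chi> i. x$i + c) = (\<chi> i. (- x)$i + (- c))" by (simp add: vec_eq_iff)
  have e2: "T (\<chi> i. (- x)$i + (- c)) = (\<chi> i. T (- x) $ i + (- c))"
    using tT unfolding topical_def by blast
  show "- T (- (\<chi> i. x$i + c)) = (\<chi> i. (- T (- x)) $ i + c)"
    unfolding e e2 by (simp add: vec_eq_iff)
qed

lemma CW_dual:
  fixes T :: "real^'n \<Rightarrow> real^'n"
  assumes tT: "topical T" and L: "L \<noteq> {}" and weak: "\<forall>x. \<exists>i\<in>L. T x $ i \<le> x$i + c"
  shows "\<exists>B q. B \<noteq> {} \<and> B \<subseteq> L \<and> (\<forall>i\<in>B. \<forall>y. (\<forall>j\<in>B. y$j \<le> q$j) \<longrightarrow> T y $ i \<le> q$i + c)"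
proof -
  have w': "\<forall>x. \<exists>i\<in>L. x$i + (-c) \<le> (\<lambda>x. - T (- x)) x $ i"
  proof
    fix x :: "real^'n"
    obtain i where "i \<in> L" "T (- x) $ i \<le> (- x)$i + c" using weak by blast
    then show "\<exists>i\<in>L. x$i + (-c) \<le> (\<lambda>x. - T (- x)) x $ i" by force
  qed
  obtain A p where Ap: "A \<noteq> {}" "A \<subseteq> L"
    "\<forall>i\<in>A. \<forall>y. (\<forall>j\<in>A. p$j \<le> y$j) \<longrightarrow> p$i + (-c) \<le> (\<lambda>x. - T (- x)) y $ i"
    using CW[OF topical_dual[OF tT] L w'] by blast
  have "\<forall>i\<in>A. \<forall>y. (\<forall>j\<in>A. y$j \<le> (-p)$j) \<longrightarrow> T y $ i \<le> (-p)$i + c"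
  proof (intro ballI allI impI)
    fix i y assume i: "i \<in> A" and y: "\<forall>j\<in>A. y$j \<le> (-p)$j"
    have "\<forall>j\<in>A. p$j \<le> (- y)$j" using y by auto
    then have "p$i + (-c) \<le> (\<lambda>x. - T (- x)) (- y) $ i" using Ap(3) i by blast
    then show "T y $ i \<le> (-p)$i + c" by simp
  qed
  then show ?thesis using Ap(1,2) by blast
qed

lemma var_norm_ge: "x$i - x$j \<le> var_norm x"
proof -
  have "x$i \<le> Max (range (\<lambda>i. x$i))" by (rule Max_ge) auto
  moreover have "Min (range (\<lambda>i. x$i)) \<le> x$j" by (rule Min_le) auto
  ultimately show ?thesis unfolding var_norm_def by linarith
qed

lemma sufficiency:
  fixes T :: "real^'n \<Rightarrow> real^'n"
  assumes tT: "topical T"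
    and cond: "\<forall>J::'n set. J \<noteq> {} \<and> J \<noteq> UNIV \<longrightarrow>
            r_upper (T_bot J T) < lambda_lower (T_top (UNIV - J) T)"
  shows "additive_eigenvectors T \<noteq> {} \<and> (\<exists>C. \<forall>x\<in>additive_eigenvectors T. var_norm x \<le> C)"
proof -
  define PJ where "PJ = {J::'n set. J \<noteq> {} \<and> J \<noteq> UNIV}"
  define \<Phi> where "\<Phi> = (\<lambda>J G. G \<ge> 0 \<and> (\<forall>(x::real^'n) M. (\<forall>i\<in>J. x$i + M \<le> T x $ i) \<longrightarrow> (\<forall>i. i \<notin> J \<longrightarrow> T x $ i \<le> x$i + M)
           \<longrightarrow> \<not> (\<forall>i\<in>J. \<forall>j. j \<notin> J \<longrightarrow> x$j + G < x$i)))"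
  have "\<forall>J\<in>PJ. \<exists>G. \<Phi> J G"
  proof
    fix J assume "J \<in> PJ"
    then have J: "J \<noteq> {}" "J \<noteq> UNIV" unfolding PJ_def by auto
    show "\<exists>G. \<Phi> J G" unfolding \<Phi>_def using cond_gap[OF tT J] cond J by blast
  qed
  then obtain g where g: "\<forall>J\<in>PJ. \<Phi> J (g J)" using bchoice by blast
  define G where "G = (\<Sum>J\<in>PJ. g J)"
  have G0: "G \<ge> 0" unfolding G_def using g \<Phi>_def by (auto intro: sum_nonneg)
  have gG: "g J \<le> G" if "J \<in> PJ" for J
    unfolding G_def by (rule member_le_sum) (use that g \<Phi>_def in auto)
  have NG: "\<not> (\<forall>i\<in>J. \<forall>j. j \<notin> J \<longrightarrow> x$j + G < x$i)"
    if J: "J \<noteq> {}" "J \<noteq> UNIV" and h1: "\<forall>i\<in>J. x$i + M \<le> T x $ i"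
      and h2: "\<forall>i. i \<notin> J \<longrightarrow> T x $ i \<le> x$i + M" for J x M
  proof
    assume gap: "\<forall>i\<in>J. \<forall>j. j \<notin> J \<longrightarrow> x$j + G < x$i"
    have JP: "J \<in> PJ" using J unfolding PJ_def by auto
    have "\<forall>i\<in>J. \<forall>j. j \<notin> J \<longrightarrow> x$j + g J < x$i" using gap gG[OF JP] by force
    then show False using g JP h1 h2 unfolding \<Phi>_def by blast
  qed
  define C where "C = (real CARD('n) - 1) * G"
  have cpos: "real CARD('n) \<ge> 1" by simp
  have C0: "C \<ge> 0" unfolding C_def using G0 cpos by simp
  have bound: "var_norm x \<le> C" if xe: "x \<in> additive_eigenvectors T" for x
  proof (rule ccontr)
    assume "\<not> var_norm x \<le> C"
    then have big: "Max (range (\<lambda>i. x$i)) - Min (range (\<lambda>i. x$i)) > (real CARD('n) - 1) * G"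
      unfolding var_norm_def C_def by simp
    obtain c where c: "T x = (\<chi> i. x$i + c)" using xe unfolding additive_eigenvectors_def by blast
    obtain J where J: "J \<noteq> {}" "J \<noteq> UNIV" "\<forall>i\<in>J. \<forall>j. j \<notin> J \<longrightarrow> x$j + G < x$i"
      using gap_lemma[OF G0 big] by blast
    have "\<forall>i\<in>J. x$i + c \<le> T x $ i" "\<forall>i. i \<notin> J \<longrightarrow> T x $ i \<le> x$i + c" using c by auto
    then show False using NG[OF J(1,2)] J(3) by blast
  qed
  define R where "R = C + 1"
  have R: "R > 0" unfolding R_def using C0 by simp
  obtain x M where xM: "\<forall>k. -R \<le> x$k \<and> x$k \<le> 0" "\<exists>k0. x$k0 = 0"
    "\<forall>k. T x $ k \<le> x$k + M" "\<forall>k. -R < x$k \<longrightarrow> T x $ k = x$k + M"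
    using clamp_fix[OF tT _ R, of UNIV] by auto
  have "\<forall>k. -R < x$k"
  proof (rule ccontr)
    assume "\<not> (\<forall>k. -R < x$k)"
    then obtain k1 where "\<not> -R < x$k1" by blast
    then have k1: "x$k1 = -R" using xM(1) by (meson antisym not_less)
    obtain k0 where k0: "x$k0 = 0" using xM(2) by blast
    have "R \<le> var_norm x" using var_norm_ge[of x k0 k1] k0 k1 by simp
    then have big: "Max (range (\<lambda>i. x$i)) - Min (range (\<lambda>i. x$i)) > (real CARD('n) - 1) * G"
      unfolding var_norm_def R_def C_def by simp
    obtain J where J: "J \<noteq> {}" "J \<noteq> UNIV" "\<forall>i\<in>J. \<forall>j. j \<notin> J \<longrightarrow> x$j + G < x$i"
      using gap_lemma[OF G0 big] by blast
    obtain j0 where j0: "j0 \<notin> J" using J(2) by blast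
    have "\<forall>i\<in>J. x$i + M \<le> T x $ i"
    proof
      fix i assume i: "i \<in> J"
      have "x$j0 + G < x$i" using J(3) i j0 by blast
      then have "-R < x$i" using xM(1) G0 by (smt (verit))
      then show "x$i + M \<le> T x $ i" using xM(4) by simp
    qed
    moreover have "\<forall>i. i \<notin> J \<longrightarrow> T x $ i \<le> x$i + M" using xM(3) by blast
    ultimately show False using NG[OF J(1,2)] J(3) by blast
  qed
  then have "T x = (\<chi> k. x$k + M)" using xM(4) by (simp add: vec_eq_iff)
  then have "x \<in> additive_eigenvectors T" unfolding additive_eigenvectors_def by blast
  then show ?thesis using bound by blast
qed



lemma necessity:
  fixes T :: "real^'n \<Rightarrow> real^'n"
  assumes tT: "topical T" and ne: "additive_eigenvectors T \<noteq> {}"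
    and bd: "\<forall>x\<in>additive_eigenvectors T. var_norm x \<le> C"
    and J: "J \<noteq> {}" "J \<noteq> UNIV"
  shows "r_upper (T_bot J T) < lambda_lower (T_top (UNIV - J) T)"
proof (rule ccontr)
  assume "\<not> ?thesis"
  then have le: "lambda_lower (T_top (UNIV - J) T) \<le> r_upper (T_bot J T)" by simp
  obtain u where "u \<in> additive_eigenvectors T" using ne by blast
  then obtain c where u: "T u = (\<chi> i. u$i + c)" unfolding additive_eigenvectors_def by blast
  have c1: "ereal c \<le> r_upper (T_bot J T)" using L3[of T u c "UNIV - J", OF u] le by simp
  have c2: "lambda_lower (T_top (UNIV - J) T) \<le> ereal c" using R3[of T u c J, OF u] le by simp
  have wK: "\<forall>x. \<exists>i\<in>J. x$i + c \<le> T x $ i"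
  proof
    fix x :: "real^'n"
    obtain i where "i \<in> J" "\<forall>y. (\<forall>j\<in>J. x$j \<le> y$j) \<longrightarrow> x$i + c \<le> T y $ i"
      using R2[OF c1, of x] by blast
    then show "\<exists>i\<in>J. x$i + c \<le> T x $ i" by blast
  qed
  have wL: "\<forall>x. \<exists>i\<in>UNIV - J. T x $ i \<le> x$i + c"
  proof
    fix x :: "real^'n"
    obtain i where "i \<in> UNIV - J" "\<forall>y. (\<forall>j\<in>UNIV - J. y$j \<le> x$j) \<longrightarrow> T y $ i \<le> x$i + c"
      using L2[OF c2, of x] by blast
    then show "\<exists>i\<in>UNIV - J. T x $ i \<le> x$i + c" by blast
  qed
  have LJ: "UNIV - J \<noteq> {}" using J(2) by blast
  obtain A p where Ap: "A \<noteq> {}" "A \<subseteq> J" "\<forall>i\<in>A. \<forall>y. (\<forall>j\<in>A. p$j \<le> y$j) \<longrightarrow> p$i + c \<le> T y $ i"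
    using CW[OF tT J(1) wK] by blast
  obtain B q where Bq: "B \<noteq> {}" "B \<subseteq> UNIV - J" "\<forall>i\<in>B. \<forall>y. (\<forall>j\<in>B. y$j \<le> q$j) \<longrightarrow> T y $ i \<le> q$i + c"
    using CW_dual[OF tT LJ wL] by blast
  define D where "D = (\<Sum>k\<in>UNIV. \<bar>p$k\<bar> + \<bar>q$k\<bar> + \<bar>u$k\<bar>)"
  have Db: "\<bar>p$k\<bar> + \<bar>q$k\<bar> + \<bar>u$k\<bar> \<le> D" for k
    unfolding D_def by (rule member_le_sum) auto
  have D0: "0 \<le> D" using Db[of undefined] by linarith
  define t where "t = 4 * D + \<bar>C\<bar> + 1"
  define s where "s = t + 3 * D"
  define a :: "real^'n" where "a = (\<chi> k. if k \<in> A then p$k + t else u$k)"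
  define b :: "real^'n" where "b = (\<chi> k. if k \<in> B then q$k + D else u$k + s)"
  have AB: "k \<in> A \<Longrightarrow> k \<notin> B" for k using Ap(2) Bq(2) by blast
  have ua: "\<And>k. u$k + 0 \<le> a$k"
  proof -
    fix k have "a$k = p$k + t \<or> a$k = u$k" unfolding a_def by simp
    then show "u$k + 0 \<le> a$k" unfolding t_def using Db[of k] D0 by (smt (verit) abs_ge_self abs_ge_minus_self abs_ge_zero)
  qed
  have sa: "a$i + c \<le> T a $ i" for i
  proof (cases "i \<in> A")
    case True
    have "\<forall>j\<in>A. p$j \<le> (\<chi> k. a$k + (-t))$j" unfolding a_def by simp
    then have "p$i + c \<le> T (\<chi> k. a$k + (-t)) $ i" using Ap(3) True by blast
    then have "p$i + c \<le> T a $ i - t" using topical_shift[OF tT, of a "-t" i] by simp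
    then show ?thesis unfolding a_def using True by simp
  next
    case False
    have "T u $ i + 0 \<le> T a $ i" by (rule topical_ge_shift[OF tT ua])
    then show ?thesis using False u unfolding a_def by simp
  qed
  have bu: "\<And>k. b$k \<le> u$k + s"
  proof -
    fix k have "b$k = q$k + D \<or> b$k = u$k + s" unfolding b_def by simp
    then show "b$k \<le> u$k + s" unfolding s_def t_def using Db[of k] D0 by (smt (verit) abs_ge_self abs_ge_minus_self abs_ge_zero)
  qed
  have sb: "T b $ i \<le> b$i + c" for i
  proof (cases "i \<in> B")
    case True
    have "\<forall>j\<in>B. (\<chi> k. b$k + (-D))$j \<le> q$j" unfolding b_def by simp
    then have "T (\<chi> k. b$k + (-D)) $ i \<le> q$i + c" using Bq(3) True by blast
    then have "T b $ i - D \<le> q$i + c" using topical_shift[OF tT, of b "-D" i] by simp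
    then show ?thesis unfolding b_def using True by simp
  next
    case False
    have "T b $ i \<le> T u $ i + s" by (rule topical_le_shift[OF tT bu])
    then show ?thesis using False u unfolding b_def by simp
  qed
  have ab: "a$k \<le> b$k" for k
  proof (cases "k \<in> A")
    case True
    have "a$k = p$k + t" "b$k = u$k + s" using True AB[OF True] unfolding a_def b_def by simp_all
    then show ?thesis using Db[of k] D0 unfolding s_def by linarith
  next
    case False
    have "a$k = u$k" using False unfolding a_def by simp
    moreover have "b$k = q$k + D \<or> b$k = u$k + s" unfolding b_def by simp
    ultimately show ?thesis using Db[of k] D0 unfolding s_def t_def by (smt (verit) abs_ge_self abs_ge_minus_self)
  qed
  obtain e where e: "\<forall>i. a$i \<le> e$i \<and> e$i \<le> b$i" "T e = (\<chi> i. e$i + c)"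
    using sandwich[OF tT ab sa sb] by blast
  have eA: "e \<in> additive_eigenvectors T" using e(2) unfolding additive_eigenvectors_def by blast
  obtain i where i: "i \<in> A" using Ap(1) by blast
  obtain j where j: "j \<in> B" using Bq(1) by blast
  have "a$i \<le> e$i" "e$j \<le> b$j" using e(1) by blast+
  moreover have "a$i = p$i + t" "b$j = q$j + D" using i j unfolding a_def b_def by simp_all
  moreover have "e$i - e$j \<le> var_norm e" by (rule var_norm_ge)
  moreover have "var_norm e \<le> C" using bd eA by blast
  moreover have "\<bar>p$i\<bar> \<le> D" "\<bar>q$j\<bar> \<le> D" using Db[of i] Db[of j] by auto
  ultimately show False unfolding t_def by linarith
qed

theorem theorem7p4:
  fixes T :: "real^'n \<Rightarrow> real^'n"
  assumes "topical T"
  shows "(additive_eigenvectors T \<noteq> {} \<and>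
          (\<exists>C. \<forall>x\<in>additive_eigenvectors T. var_norm x \<le> C)) \<longleftrightarrow>
         (\<forall>J::'n set. J \<noteq> {} \<and> J \<noteq> UNIV \<longrightarrow>
            r_upper (T_bot J T) < lambda_lower (T_top (UNIV - J) T))"
  using sufficiency[OF assms] necessity[OF assms] by blast

end
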